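(* Let $f:\mathbb{N}\to[0,\infty)$ be a weakly super-multiplicative function which has a normal order $g:(0,\infty)\to(0,\infty)$ (so $g$ is strictly positive), where $g$ is either non-decreasing or $\log$-uniformly continuous. Then \[ \sup_{n\ge 2}\frac{\log f(n)}{\log n} \;=\; \lim\operatorname{ess}_{n}\frac{\log f(n)}{\log n}, \] i.e. the essential limit on the right exists (possibly equal to $\infty$) and equals the supremum on the left (with the convention $\log 0=-\infty$).
   Context: A function $f:\mathbb{N}\to[0,\infty)$ is weakly super-multiplicative if for all $n\in\mathbb{N}$ and all $\epsilon>0$ there exist $x_0>0$ and $\delta>0$ such that for all real $x>x_0$, $\#\{m\in\mathbb{N}\cap[x,(1+\epsilon)x]: f(nm)\ge(1-\epsilon)f(n)f(m)\}\ge\delta x$. A function $f:\mathbb{N}\to[0,\infty)$ has normal order $g$ if for every $\epsilon>0$ the set $\{n\in\mathbb{N}: |f(n)-g(n)|\ge\epsilon g(n)\}$ has upper (natural) density $0$. A function $g:(0,\infty)\to(0,\infty)$ is $\log$-uniformly continuous if for every $\epsilon>0$ there is $\delta>0$ such that for all $x,y>0$ with $|x/y-1|<\delta$ we have $|g(x)/g(y)-1|<\epsilon$. The essential limit of a sequence $(a_n)$ exists and equals $a\in\mathbb{R}$ if for every $\epsilon>0$ the set $\{n:|a_n-a|>\epsilon\}$ has natural density $0$; it equals $\infty$ if for every $M\in\mathbb{R}$ the set $\{n: a_n<M\}$ has natural density $0$. *)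

theory Defs
  imports "HOL-Analysis.Analysis"
begin

text \<open>Here \<open>\<nat>\<close> is read as the positive integers {1,2,...}; counting functions
  for densities are taken over {1..N}.\<close>

definition upper_density :: "nat set \<Rightarrow> ereal" where
  "upper_density A = limsup (\<lambda>N. ereal (real (card (A \<inter> {1..N})) / real N))"

definition has_natural_density :: "nat set \<Rightarrow> real \<Rightarrow> bool" where
  "has_natural_density A d \<longleftrightarrow>
     ((\<lambda>N. real (card (A \<inter> {1..N})) / real N) \<longlongrightarrow> d) sequentially"

definition weakly_super_multiplicative :: "(nat \<Rightarrow> real) \<Rightarrow> bool" where
  "weakly_super_multiplicative f \<longleftrightarrow>
     (\<forall>n\<ge>1. \<forall>\<epsilon>>0. \<exists>x0>0. \<exists>\<delta>>0. \<forall>x::real. x > x0 \<longrightarrow>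
        real (card {m::nat. m \<ge> 1 \<and> x \<le> real m \<and> real m \<le> (1 + \<epsilon>) * x \<and>
                             f (n * m) \<ge> (1 - \<epsilon>) * f n * f m}) \<ge> \<delta> * x)"

definition has_normal_order :: "(nat \<Rightarrow> real) \<Rightarrow> (real \<Rightarrow> real) \<Rightarrow> bool" where
  "has_normal_order f g \<longleftrightarrow>
     (\<forall>\<epsilon>>0. upper_density {n. n \<ge> 1 \<and> \<bar>f n - g (real n)\<bar> \<ge> \<epsilon> * g (real n)} = 0)"

definition log_uniformly_continuous :: "(real \<Rightarrow> real) \<Rightarrow> bool" where
  "log_uniformly_continuous g \<longleftrightarrow>
     (\<forall>\<epsilon>>0. \<exists>\<delta>>0. \<forall>x y. x > 0 \<longrightarrow> y > 0 \<longrightarrow> \<bar>x / y - 1\<bar> < \<delta> \<longrightarrow>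
        \<bar>g x / g y - 1\<bar> < \<epsilon>)"

definition has_ess_lim :: "(nat \<Rightarrow> ereal) \<Rightarrow> ereal \<Rightarrow> bool" where
  "has_ess_lim a L \<longleftrightarrow>
     (case L of
        ereal r \<Rightarrow> (\<forall>\<epsilon>>0. has_natural_density {n. \<bar>a n - ereal r\<bar> > ereal \<epsilon>} 0)
      | PInfty \<Rightarrow> (\<forall>M::real. has_natural_density {n. a n < ereal M} 0)
      | MInfty \<Rightarrow> False)"

text \<open>\<open>log f(n) / log n\<close> with the convention \<open>log 0 = -\<infinity>\<close> (meaningful for n \<ge> 2).\<close>
definition log_ratio :: "(nat \<Rightarrow> real) \<Rightarrow> nat \<Rightarrow> ereal" where
  "log_ratio f n = (if f n = 0 then -\<infinity> else ereal (ln (f n) / ln (real n)))"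

end

theory Submission
  imports Defs
begin


lemma ud0_ev:
  assumes "upper_density A = 0" "\<eta> > 0"
  shows "\<exists>N0\<ge>1. \<forall>N\<ge>N0. real (card (A \<inter> {1..N})) \<le> \<eta> * real N"
proof -
  have "ereal \<eta> > limsup (\<lambda>N. ereal (real (card (A \<inter> {1..N})) / real N))"
    using assms by (simp add: upper_density_def)
  from Limsup_lessD[OF this] obtain N0 where
    h: "\<forall>N\<ge>N0. ereal (real (card (A \<inter> {1..N})) / real N) < ereal \<eta>"
    by (auto simp: eventually_sequentially)
  show ?thesis
  proof (intro exI[of _ "max N0 1"] conjI allI impI)
    fix N assume N: "max N0 1 \<le> N"
    then have "real (card (A \<inter> {1..N})) / real N < \<eta>" using h by auto
    then show "real (card (A \<inter> {1..N})) \<le> \<eta> * real N"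
      using N by (simp add: divide_less_eq)
  qed simp
qed

lemma dens0_I:
  assumes "\<And>\<eta>. \<eta> > 0 \<Longrightarrow> \<exists>N0. \<forall>N\<ge>N0. real (card (A \<inter> {1..N})) \<le> \<eta> * real N"
  shows "has_natural_density A 0"
  unfolding has_natural_density_def
proof (rule LIMSEQ_I)
  fix r :: real assume r: "r > 0"
  obtain N0 where N0: "\<forall>N\<ge>N0. real (card (A \<inter> {1..N})) \<le> r/2 * real N"
    using assms[of "r/2"] r by auto
  show "\<exists>no. \<forall>n\<ge>no. norm (real (card (A \<inter> {1..n})) / real n - 0) < r"
  proof (intro exI[of _ "max N0 1"] allI impI)
    fix n assume n: "max N0 1 \<le> n"
    then have "real (card (A \<inter> {1..n})) \<le> r/2 * real n" using N0 by auto
    then have "real (card (A \<inter> {1..n})) / real n \<le> r/2" using n by (simp add: divide_le_eq)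
    moreover have "0 \<le> real (card (A \<inter> {1..n})) / real n" by simp
    ultimately show "norm (real (card (A \<inter> {1..n})) / real n - 0) < r" using r
      by (simp only: real_norm_def diff_zero)
  qed
qed

lemma dens0_sub:
  assumes "upper_density B = 0" "A \<subseteq> {..<K} \<union> B"
  shows "has_natural_density A 0"
proof (rule dens0_I)
  fix \<eta> :: real assume e: "\<eta> > 0"
  obtain N0 where N0: "\<forall>N\<ge>N0. real (card (B \<inter> {1..N})) \<le> \<eta>/2 * real N"
    using ud0_ev[OF assms(1), of "\<eta>/2"] e by auto
  obtain N1 :: nat where N1: "real N1 \<ge> 2 * real K / \<eta>" using real_arch_simple by blast
  show "\<exists>N0. \<forall>N\<ge>N0. real (card (A \<inter> {1..N})) \<le> \<eta> * real N"
  proof (intro exI[of _ "max N0 N1"] allI impI)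
    fix N assume N: "max N0 N1 \<le> N"
    have "A \<inter> {1..N} \<subseteq> {..<K} \<union> (B \<inter> {1..N})" using assms(2) by auto
    then have "card (A \<inter> {1..N}) \<le> card ({..<K} \<union> (B \<inter> {1..N}))"
      by (intro card_mono) auto
    also have "\<dots> \<le> card {..<K} + card (B \<inter> {1..N})" by (rule card_Un_le)
    finally have "real (card (A \<inter> {1..N})) \<le> real K + real (card (B \<inter> {1..N}))" by simp
    also have "\<dots> \<le> real K + \<eta>/2 * real N" using N0 N by auto
    also have "real K \<le> \<eta>/2 * real N"
    proof -
      have "2 * real K / \<eta> \<le> real N" using N1 N by linarith
      then show ?thesis using e by (simp add: divide_le_eq field_simps)
    qed
    finally show "real (card (A \<inter> {1..N})) \<le> \<eta> * real N" by linarith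
  qed
qed



lemma reg_lemma:
  fixes g :: "real \<Rightarrow> real"
  assumes g_pos: "\<forall>x>0. g x > 0"
    and g_reg: "mono_on {0<..} g \<or> log_uniformly_continuous g"
    and e: "0 < \<eta>" "\<eta> < 1"
  shows "\<exists>\<theta>>0. \<forall>y' y. 0 < y' \<longrightarrow> y' \<le> y \<longrightarrow> y \<le> (1+\<theta>)*y' \<longrightarrow> (1-\<eta>) * g y' \<le> g y"
  using g_reg
proof
  assume m: "mono_on {0<..} g"
  show ?thesis
  proof (intro exI[of _ 1] conjI allI impI)
    fix y' y :: real assume h: "0 < y'" "y' \<le> y"
    have "g y' \<le> g y" using m h by (auto intro: mono_onD)
    moreover have "g y' > 0" using g_pos h by auto
    ultimately show "(1-\<eta>) * g y' \<le> g y" using e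
      by (smt (verit) mult_le_cancel_right1)
  qed simp
next
  assume "log_uniformly_continuous g"
  then obtain \<delta> where d: "\<delta> > 0" and
    H: "\<forall>x y. x > 0 \<longrightarrow> y > 0 \<longrightarrow> \<bar>x / y - 1\<bar> < \<delta> \<longrightarrow> \<bar>g x / g y - 1\<bar> < \<eta>"
    using e unfolding log_uniformly_continuous_def by blast
  show ?thesis
  proof (intro exI[of _ "\<delta>/2"] conjI allI impI)
    fix y' y :: real assume h: "0 < y'" "y' \<le> y" "y \<le> (1 + \<delta>/2) * y'"
    have "y / y' \<ge> 1" using h by simp
    moreover have "y / y' \<le> 1 + \<delta>/2" using h by (simp add: divide_le_eq)
    ultimately have "\<bar>y / y' - 1\<bar> < \<delta>" using d by auto
    then have "\<bar>g y / g y' - 1\<bar> < \<eta>" using H h by auto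
    then have "g y / g y' > 1 - \<eta>" by auto
    moreover have "g y' > 0" using g_pos h by auto
    ultimately show "(1-\<eta>) * g y' \<le> g y" by (simp add: less_divide_eq)
  qed (use d in simp)
qed

lemma base_lemma:
  fixes g :: "real \<Rightarrow> real"
  assumes g_pos: "\<forall>x>0. g x > 0" and th: "\<theta> > 0"
    and R: "\<forall>y' y. 0 < y' \<longrightarrow> y' \<le> y \<longrightarrow> y \<le> (1+\<theta>)*y' \<longrightarrow> (1-1/2) * g y' \<le> g y"
    and X: "X > 0"
  shows "\<exists>G0>0. \<forall>y. X \<le> y \<longrightarrow> y \<le> Y \<longrightarrow> G0 \<le> g y"
proof -
  have P: "\<forall>y. X \<le> y \<longrightarrow> y \<le> X * (1+\<theta>)^j \<longrightarrow> g X / 2^j \<le> g y" for j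
  proof (induction j)
    case 0
    then show ?case by auto
  next
    case (Suc j)
    show ?case
    proof (intro allI impI)
      fix y assume y: "X \<le> y" "y \<le> X * (1+\<theta>)^Suc j"
      have gX: "g X > 0" using g_pos X by auto
      show "g X / 2 ^ Suc j \<le> g y"
      proof (cases "y \<le> X * (1+\<theta>)^j")
        case True
        then have "g X / 2^j \<le> g y" using Suc y by auto
        moreover have "g X / 2 ^ Suc j \<le> g X / 2^j" using gX by (simp add: divide_le_eq)
        ultimately show ?thesis by linarith
      next
        case False
        define y' where "y' = max X (y / (1+\<theta>))"
        have pw: "1 \<le> (1+\<theta>)^j" using th by simp
        have y'1: "X \<le> y'" unfolding y'_def by simp
        have y'2: "y' \<le> X * (1+\<theta>)^j"
        proof -
          have "y / (1+\<theta>) \<le> X * (1+\<theta>)^j" using y th by (simp add: divide_le_eq mult.commute mult.left_commute)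
          moreover have "X \<le> X * (1+\<theta>)^j" using pw X by simp
          ultimately show ?thesis unfolding y'_def by simp
        qed
        have y'3: "y' \<le> y" unfolding y'_def using y False th pw X
          by (auto simp: divide_le_eq)
        have y'4: "y \<le> (1+\<theta>) * y'"
        proof -
          have "y = (1+\<theta>) * (y / (1+\<theta>))" using th by simp
          also have "\<dots> \<le> (1+\<theta>) * y'" unfolding y'_def using th by (intro mult_left_mono) auto
          finally show ?thesis .
        qed
        have "g X / 2^j \<le> g y'" using Suc y'1 y'2 by auto
        moreover have "(1-1/2) * g y' \<le> g y" using R y'1 y'3 y'4 X by auto
        ultimately have "g X \<le> g y' * 2 ^ j" "g y' \<le> g y * 2" by (simp_all add: field_simps)
        then have "g X \<le> (g y * 2) * 2 ^ j" by (smt (verit) mult_right_mono zero_le_power)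
        then show ?thesis by (simp add: field_simps)
      qed
    qed
  qed
  obtain j where j: "Y / X < (1+\<theta>)^j" using real_arch_pow[of "1+\<theta>" "Y/X"] th by auto
  have gX: "g X > 0" using g_pos X by auto
  show ?thesis
  proof (intro exI[of _ "g X / 2^j"] conjI allI impI)
    fix y assume "X \<le> y" "y \<le> Y"
    moreover have "Y \<le> X * (1+\<theta>)^j" using j X by (simp add: divide_less_eq mult.commute)
    ultimately show "g X / 2^j \<le> g y" using P by auto
  qed (use gX in simp)
qed

lemma iter_lemma:
  fixes g :: "real \<Rightarrow> real"
  assumes g_pos: "\<forall>x>0. g x > 0" and q: "q > 1" and X: "X \<ge> 1" and D: "D > 0"
    and rec: "\<forall>x\<ge>X. D * g x \<le> g (q*x)"
    and G0: "G0 > 0" "\<forall>y. X \<le> y \<longrightarrow> y \<le> q * X \<longrightarrow> G0 \<le> g y"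
  shows "\<exists>H0. \<forall>y\<ge>X. H0 + (ln D / ln q) * ln y \<le> ln (g y)"
proof -
  define \<beta> where "\<beta> = ln D / ln q"
  define h where "h y = ln (g y) - \<beta> * ln y" for y
  have lq: "ln q > 0" using q by simp
  have mono: "h x \<le> h (q*x)" if x: "x \<ge> X" for x
  proof -
    have gx: "g x > 0" using g_pos x X by auto
    have "D * g x \<le> g (q*x)" using rec x by auto
    then have "ln (D * g x) \<le> ln (g (q*x))" using gx D by (subst ln_le_cancel_iff) (auto, smt (verit) mult_pos_pos)
    then have "ln D + ln (g x) \<le> ln (g (q*x))" using gx D by (simp add: ln_mult)
    moreover have "\<beta> * ln (q*x) = ln D + \<beta> * ln x"
      using lq q x X by (simp add: \<beta>_def ln_mult distrib_left)
    ultimately show ?thesis unfolding h_def by linarith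
  qed
  define H0 where "H0 = ln G0 - \<bar>\<beta>\<bar> * ln (q*X)"
  have base: "H0 \<le> h y" if y: "X \<le> y" "y \<le> q * X" for y
  proof -
    have "ln G0 \<le> ln (g y)" using G0 y X by auto
    moreover have "\<beta> * ln y \<le> \<bar>\<beta>\<bar> * ln (q*X)"
    proof -
      have "0 \<le> ln y" using y X by simp
      moreover have "ln y \<le> ln (q*X)" using y X by simp
      ultimately have "\<beta> * ln y \<le> \<bar>\<beta>\<bar> * ln y" by (simp add: mult_right_mono)
      also have "\<dots> \<le> \<bar>\<beta>\<bar> * ln (q*X)" using \<open>ln y \<le> ln (q*X)\<close> by (simp add: mult_left_mono)
      finally show ?thesis .
    qed
    ultimately show ?thesis unfolding H0_def h_def by linarith
  qed
  have P: "\<forall>y. X \<le> y \<longrightarrow> y \<le> q^Suc k * X \<longrightarrow> H0 \<le> h y" for k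
  proof (induction k)
    case 0
    then show ?case using base by auto
  next
    case (Suc k)
    show ?case
    proof (intro allI impI)
      fix y assume y: "X \<le> y" "y \<le> q ^ Suc (Suc k) * X"
      show "H0 \<le> h y"
      proof (cases "y \<le> q * X")
        case True then show ?thesis using base y by auto
      next
        case False
        have y1: "X \<le> y / q" using False q by (simp add: le_divide_eq mult.commute)
        have y2: "y / q \<le> q ^ Suc k * X" using y q by (simp add: divide_le_eq mult.commute mult.left_commute)
        have "H0 \<le> h (y/q)" using Suc y1 y2 by auto
        also have "\<dots> \<le> h (q * (y/q))" using mono[OF y1] .
        finally show ?thesis using q by simp
      qed
    qed
  qed
  show ?thesis
  proof (intro exI[of _ H0] allI impI)
    fix y assume y: "X \<le> y"
    obtain k where k: "y / X < q^k" using real_arch_pow[OF q] by auto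
    have "y \<le> q^Suc k * X"
    proof -
      have "y < q^k * X" using k X by (simp add: divide_less_eq)
      also have "\<dots> \<le> q^Suc k * X" using q X by simp
      finally show ?thesis by simp
    qed
    then have "H0 \<le> h y" using P y by auto
    then show "H0 + (ln D / ln q) * ln y \<le> ln (g y)" unfolding h_def \<beta>_def by simp
  qed
qed



lemma arith_aux:
  fixes A B E F \<eta> \<epsilon> P Q R :: real
  assumes "- 2 * \<eta> \<le> A" "- 2 * \<epsilon> \<le> B" "E \<le> \<epsilon>" "Q \<le> P"
    "9 * \<eta> + P \<le> (F - R) / 2" "0 < F - R" "\<epsilon> \<le> \<eta>"
  shows "R + Q < 2 * A + 2 * B - E + F"
  using assms by argo

lemma rec_lemma:
  fixes f :: "nat \<Rightarrow> real" and g :: "real \<Rightarrow> real"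
  assumes f_nonneg: "\<forall>n\<ge>1. f n \<ge> 0"
    and wsm: "weakly_super_multiplicative f"
    and g_pos: "\<forall>x>0. g x > 0"
    and normal: "has_normal_order f g"
    and Reg: "\<And>\<eta>. 0 < \<eta> \<Longrightarrow> \<eta> < 1 \<Longrightarrow>
       \<exists>\<theta>>0. \<forall>y' y. 0 < y' \<longrightarrow> y' \<le> y \<longrightarrow> y \<le> (1+\<theta>)*y' \<longrightarrow> (1-\<eta>) * g y' \<le> g y"
    and n0: "n0 \<ge> 2" "f n0 > 0" "c < ln (f n0) / ln (real n0)"
  shows "\<exists>q D X. q > 1 \<and> D > 0 \<and> X \<ge> 1 \<and> c < ln D / ln q \<and> (\<forall>x\<ge>X. D * g x \<le> g (q*x))"
proof -
  define f0 where "f0 = f n0"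
  have f0: "f0 > 0" using n0 by (simp add: f0_def)
  have ln0: "ln (real n0) > 0" using n0 by simp
  define \<gamma> where "\<gamma> = ln f0 - c * ln (real n0)"
  have \<gamma>: "\<gamma> > 0" using n0(3) ln0 by (simp add: \<gamma>_def f0_def less_divide_eq)
  define \<eta> where "\<eta> = min (1/2) (\<gamma> / (2 * (9 + \<bar>c\<bar>)))"
  have \<eta>0: "0 < \<eta>" "\<eta> \<le> 1/2" using \<gamma> unfolding \<eta>_def by (auto simp: min_def)
  have \<eta>1: "9 * \<eta> + \<eta> * \<bar>c\<bar> \<le> \<gamma>/2"
  proof -
    have "\<eta> \<le> \<gamma> / (2 * (9 + \<bar>c\<bar>))" by (simp add: \<eta>_def)
    moreover have p: "0 < 2*(9+\<bar>c\<bar>)" by simp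
    ultimately have "\<eta> * (2*(9+\<bar>c\<bar>)) \<le> \<gamma>" using pos_le_divide_eq[OF p] by blast
    moreover have "\<eta> * (2*(9+\<bar>c\<bar>)) = 18 * \<eta> + 2 * (\<eta> * \<bar>c\<bar>)" by (simp add: algebra_simps)
    ultimately show ?thesis by linarith
  qed
  obtain \<theta> where th: "\<theta> > 0" and
    R: "\<forall>y' y. 0 < y' \<longrightarrow> y' \<le> y \<longrightarrow> y \<le> (1+\<theta>)*y' \<longrightarrow> (1-\<eta>) * g y' \<le> g y"
    using Reg[of \<eta>] \<eta>0 by auto
  define \<epsilon> where "\<epsilon> = min \<eta> \<theta>"
  have \<epsilon>0: "0 < \<epsilon>" "\<epsilon> \<le> \<eta>" "\<epsilon> \<le> \<theta>" "\<epsilon> \<le> 1/2" using \<eta>0 th by (auto simp: \<epsilon>_def)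
  define q where "q = real n0 * (1+\<epsilon>)"
  define D where "D = (1-\<eta>)^2 * (1-\<epsilon>)^2 / (1+\<epsilon>) * f0"
  have q1: "q > 1"
  proof -
    have "real n0 \<ge> 2" using n0 by simp
    then show ?thesis using \<epsilon>0 unfolding q_def by (smt (verit) mult_le_cancel_left1)
  qed
  have D0: "D > 0" unfolding D_def using \<eta>0 \<epsilon>0 f0 by simp
  have cD: "c < ln D / ln q"
  proof -
    have lq: "ln q > 0" using q1 by simp
    have a1: "ln (1-\<eta>) \<ge> -2*\<eta>"
    proof -
      have "\<eta> * \<eta> \<le> \<eta> * (1/2)" using \<eta>0 by (intro mult_left_mono) auto
      moreover have "- \<eta> - 2 * \<eta>^2 \<le> ln (1 - \<eta>)" using ln_one_minus_pos_lower_bound[of \<eta>] \<eta>0 by auto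
      ultimately show ?thesis unfolding power2_eq_square by linarith
    qed
    have a2: "ln (1-\<epsilon>) \<ge> -2*\<epsilon>"
    proof -
      have "\<epsilon> * \<epsilon> \<le> \<epsilon> * (1/2)" using \<epsilon>0 by (intro mult_left_mono) auto
      moreover have "- \<epsilon> - 2 * \<epsilon>^2 \<le> ln (1 - \<epsilon>)" using ln_one_minus_pos_lower_bound[of \<epsilon>] \<epsilon>0 by auto
      ultimately show ?thesis unfolding power2_eq_square by linarith
    qed
    have a3: "ln (1+\<epsilon>) \<le> \<epsilon>" "ln (1+\<epsilon>) \<ge> 0" using ln_add_one_self_le_self[of \<epsilon>] \<epsilon>0 by auto
    have lD: "ln D = 2 * ln (1-\<eta>) + 2 * ln (1-\<epsilon>) - ln (1+\<epsilon>) + ln f0"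
      unfolding D_def using \<eta>0 \<epsilon>0 f0 by (simp add: ln_mult ln_div ln_realpow)
    have lqe: "ln q = ln (real n0) + ln (1+\<epsilon>)"
      unfolding q_def using n0 \<epsilon>0 by (simp add: ln_mult)
    have b1: "c * ln (1+\<epsilon>) \<le> \<bar>c\<bar> * \<eta>"
    proof -
      have "c * ln (1+\<epsilon>) \<le> \<bar>c\<bar> * ln (1+\<epsilon>)" using a3 by (simp add: mult_right_mono)
      also have "\<dots> \<le> \<bar>c\<bar> * \<eta>" using a3 \<epsilon>0 by (intro mult_left_mono) auto
      finally show ?thesis .
    qed
    have nn: "0 \<le> \<eta> * \<bar>c\<bar>" using \<eta>0 by simp
    have "c * ln (real n0) + c * ln (1 + \<epsilon>)
       < 2 * ln (1 - \<eta>) + 2 * ln (1 - \<epsilon>) - ln (1 + \<epsilon>) + ln f0"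
      by (rule arith_aux[of \<eta> "ln (1-\<eta>)" \<epsilon> "ln (1-\<epsilon>)" "ln (1+\<epsilon>)" "c * ln (1+\<epsilon>)" "\<eta> * \<bar>c\<bar>" "ln f0" "c * ln (real n0)"])
         (use a1 a2 a3 b1 \<eta>1 \<gamma> \<epsilon>0 mult.commute[of "\<bar>c\<bar>" \<eta>] in \<open>auto simp: \<gamma>_def\<close>)
    then have "c * ln q < ln D" using lD lqe by (simp add: distrib_left)
    then show ?thesis using lq by (simp add: less_divide_eq)
  qed
  define B where "B = {n. n \<ge> 1 \<and> \<bar>f n - g (real n)\<bar> \<ge> \<epsilon> * g (real n)}"
  have udB: "upper_density B = 0" using normal \<epsilon>0 unfolding has_normal_order_def B_def by auto
  obtain x0 \<delta> where x0: "x0 > 0" and d: "\<delta> > 0" and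
    W: "\<forall>x::real. x > x0 \<longrightarrow>
        real (card {m::nat. m \<ge> 1 \<and> x \<le> real m \<and> real m \<le> (1 + \<epsilon>) * x \<and>
                             f (n0 * m) \<ge> (1 - \<epsilon>) * f n0 * f m}) \<ge> \<delta> * x"
    using wsm[unfolded weakly_super_multiplicative_def, rule_format, of n0 \<epsilon>] \<epsilon>0 n0 by auto
  define \<delta>' where "\<delta>' = \<delta> / (4 * (1+\<epsilon>) * (1 + real n0))"
  have d': "\<delta>' > 0" using d \<epsilon>0 by (simp add: \<delta>'_def)
  obtain N0 where N0: "\<forall>N\<ge>N0. real (card (B \<inter> {1..N})) \<le> \<delta>' * real N"
    using ud0_ev[OF udB d'] by auto
  define X where "X = max 1 (max (x0+1) (real N0 + 1))"
  have good: "\<exists>m::nat. m \<ge> 1 \<and> x \<le> real m \<and> real m \<le> (1 + \<epsilon>) * x \<and>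
           f (n0 * m) \<ge> (1 - \<epsilon>) * f n0 * f m \<and> m \<notin> B \<and> n0 * m \<notin> B" if x: "x \<ge> X" for x
  proof (rule ccontr)
    assume nex: "\<not> ?thesis"
    define S where "S = {m::nat. m \<ge> 1 \<and> x \<le> real m \<and> real m \<le> (1 + \<epsilon>) * x \<and>
                             f (n0 * m) \<ge> (1 - \<epsilon>) * f n0 * f m}"
    have xpos: "x > 0" "x > x0" "x \<ge> real N0 + 1" using x x0 by (auto simp: X_def)
    have cS: "real (card S) \<ge> \<delta> * x" using W xpos unfolding S_def by auto
    define N where "N = nat \<lfloor>(1+\<epsilon>)*x\<rfloor>"
    have NN0: "N \<ge> N0"
    proof -
      have "real N0 \<le> (1+\<epsilon>) * x" using xpos \<epsilon>0 by (smt (verit) mult_le_cancel_right1)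
      then show ?thesis unfolding N_def by (rule le_nat_floor)
    qed
    have Nx: "real N \<le> (1+\<epsilon>)*x" unfolding N_def using xpos \<epsilon>0 by simp
    define T where "T = {m \<in> {1..N}. n0 * m \<in> B}"
    have SBT: "S \<subseteq> (B \<inter> {1..N}) \<union> T"
    proof
      fix m assume m: "m \<in> S"
      then have "m \<le> N" unfolding S_def N_def by (auto intro: le_nat_floor)
      moreover have "m \<in> B \<or> n0 * m \<in> B" using m nex unfolding S_def by blast
      ultimately show "m \<in> (B \<inter> {1..N}) \<union> T" using m unfolding S_def T_def by auto
    qed
    have cT: "card T \<le> card (B \<inter> {1..n0*N})"
    proof -
      have "inj_on (\<lambda>m. n0 * m) T" using n0 by (auto simp: inj_on_def)
      moreover have "(\<lambda>m. n0 * m) ` T \<subseteq> B \<inter> {1..n0*N}" using n0 unfolding T_def by auto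
      ultimately show ?thesis by (intro card_inj_on_le) auto
    qed
    have "card S \<le> card ((B \<inter> {1..N}) \<union> T)" using SBT by (intro card_mono) (auto simp: T_def)
    also have "\<dots> \<le> card (B \<inter> {1..N}) + card T" by (rule card_Un_le)
    finally have "real (card S) \<le> real (card (B \<inter> {1..N})) + real (card (B \<inter> {1..n0*N}))"
      using cT by linarith
    also have "\<dots> \<le> \<delta>' * real N + \<delta>' * real (n0*N)"
    proof -
      have "N0 \<le> n0 * N" using NN0 n0 by (metis le_trans mult_1 mult_le_mono1 one_le_numeral order_trans)
      then show ?thesis using N0 NN0 by (intro add_mono) auto
    qed
    also have "\<dots> = \<delta>' * (1 + real n0) * real N" by (simp add: algebra_simps)
    also have "\<dots> \<le> \<delta>' * (1 + real n0) * ((1+\<epsilon>)*x)" using Nx d' by (intro mult_left_mono) auto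
    also have "\<dots> = (\<delta>' * (4*(1+\<epsilon>)*(1+real n0))) * x / 4" by (simp add: algebra_simps)
    also have "\<delta>' * (4*(1+\<epsilon>)*(1+real n0)) = \<delta>"
    proof -
      have "4*(1+\<epsilon>)*(1+real n0) > 0" using \<epsilon>0 by simp
      then show ?thesis unfolding \<delta>'_def using \<epsilon>0 by simp
    qed
    finally have "real (card S) \<le> \<delta> * x / 4" .
    moreover have "\<delta> * x > 0" using d xpos by simp
    ultimately show False using cS by linarith
  qed
  show ?thesis
  proof (rule exI[of _ q], rule exI[of _ D], rule exI[of _ X], intro conjI q1 D0 cD)
    show "X \<ge> 1" by (simp add: X_def)
    show "\<forall>x\<ge>X. D * g x \<le> g (q*x)"
  proof (intro allI impI)
    fix x assume x: "x \<ge> X"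
    then have xp: "x > 0" by (simp add: X_def)
    obtain m :: nat where m: "m \<ge> 1" "x \<le> real m" "real m \<le> (1 + \<epsilon>) * x"
      "f (n0 * m) \<ge> (1 - \<epsilon>) * f n0 * f m" "m \<notin> B" "n0 * m \<notin> B"
      using good[OF x] by blast
    have mp: "real m > 0" using m by simp
    have gm: "g (real m) > 0" using g_pos mp by auto
    have n0m: "n0 * m \<ge> 1" using m n0 by simp
    have fm: "f m \<ge> (1-\<epsilon>) * g (real m)"
    proof -
      have "\<bar>f m - g (real m)\<bar> < \<epsilon> * g (real m)" using m unfolding B_def by auto
      then show ?thesis by (auto simp: algebra_simps)
    qed
    have fnm: "f (n0*m) \<le> (1+\<epsilon>) * g (real (n0*m))"
    proof -
      have "\<bar>f (n0*m) - g (real (n0*m))\<bar> < \<epsilon> * g (real (n0*m))" using m n0m unfolding B_def by auto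
      then show ?thesis by (auto simp: algebra_simps)
    qed
    have s1: "(1-\<eta>) * g x \<le> g (real m)"
      using R xp m \<epsilon>0 by (smt (verit) mult_right_mono)
    have s2: "(1-\<eta>) * g (real (n0*m)) \<le> g (q*x)"
    proof -
      have "real (n0*m) \<le> q * x" unfolding q_def using m n0 by (simp add: mult_left_mono mult.assoc)
      moreover have "q * x \<le> (1+\<theta>) * real (n0*m)"
      proof -
        have "q * x = (1+\<epsilon>) * (real n0 * x)" unfolding q_def by simp
        also have "\<dots> \<le> (1+\<theta>) * (real n0 * real m)" using \<epsilon>0 m xp
          by (intro mult_mono) (auto intro: mult_left_mono)
        finally show ?thesis by simp
      qed
      moreover have "real (n0*m) > 0" using n0m by simp
      ultimately show ?thesis using R by auto
    qed
    have s3: "(1-\<epsilon>)^2 / (1+\<epsilon>) * f0 * g (real m) \<le> g (real (n0*m))"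
    proof -
      have "(1-\<epsilon>)^2 * f0 * g (real m) = (1-\<epsilon>) * f0 * ((1-\<epsilon>) * g (real m))"
        by (simp add: power2_eq_square algebra_simps)
      also have "\<dots> \<le> (1-\<epsilon>) * f0 * f m" using fm \<epsilon>0 f0 by (intro mult_left_mono) auto
      also have "\<dots> \<le> f (n0*m)" using m(4) by (simp add: f0_def)
      also have "\<dots> \<le> (1+\<epsilon>) * g (real (n0*m))" by (rule fnm)
      finally show ?thesis using \<epsilon>0 by (simp add: divide_le_eq mult.commute)
    qed
    have "D * g x = (1-\<eta>) * ((1-\<epsilon>)^2 / (1+\<epsilon>) * f0) * ((1-\<eta>) * g x)"
      unfolding D_def by (simp add: power2_eq_square algebra_simps)
    also have "\<dots> \<le> (1-\<eta>) * ((1-\<epsilon>)^2 / (1+\<epsilon>) * f0) * g (real m)"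
      using s1 \<eta>0 \<epsilon>0 f0 by (intro mult_left_mono) auto
    also have "\<dots> \<le> (1-\<eta>) * g (real (n0*m))"
    proof -
      have "(1-\<eta>) * ((1-\<epsilon>)^2 / (1+\<epsilon>) * f0 * g (real m)) \<le> (1-\<eta>) * g (real (n0*m))"
        by (rule mult_left_mono[OF s3]) (use \<eta>0 in simp)
      then show ?thesis by (metis mult.assoc)
    qed
    also have "\<dots> \<le> g (q*x)" by (rule s2)
    finally show "D * g x \<le> g (q*x)" .
  qed
  qed
qed



theorem theorem1:
  fixes f :: "nat \<Rightarrow> real" and g :: "real \<Rightarrow> real"
  assumes f_nonneg: "\<forall>n\<ge>1. f n \<ge> 0"
    and wsm: "weakly_super_multiplicative f"
    and g_pos: "\<forall>x>0. g x > 0"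
    and normal: "has_normal_order f g"
    and g_reg: "mono_on {0<..} g \<or> log_uniformly_continuous g"
  shows "has_ess_lim (log_ratio f) (SUP n\<in>{2..}. log_ratio f n)"
proof -
  define a where "a = log_ratio f"
  define s where "s = (SUP n\<in>{2..}. a n)"
  have Reg: "\<And>\<eta>. 0 < \<eta> \<Longrightarrow> \<eta> < 1 \<Longrightarrow>
       \<exists>\<theta>>0. \<forall>y' y. 0 < y' \<longrightarrow> y' \<le> y \<longrightarrow> y \<le> (1+\<theta>)*y' \<longrightarrow> (1-\<eta>) * g y' \<le> g y"
    using reg_lemma[OF g_pos g_reg] by blast
  define B2 where "B2 = {n. n \<ge> 1 \<and> \<bar>f n - g (real n)\<bar> \<ge> (1/2) * g (real n)}"
  have udB: "upper_density B2 = 0"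
    using normal[unfolded has_normal_order_def, rule_format, of "1/2"] unfolding B2_def by simp
  have le_s: "a n \<le> s" if "n \<ge> 2" for n unfolding s_def using that by (auto intro: SUP_upper)
  have key: "\<exists>K. {n. a n < ereal c} \<subseteq> {..<K} \<union> B2" if cs: "ereal c < s" for c
  proof -
    obtain n0 where n0: "n0 \<ge> 2" "ereal c < a n0" using cs unfolding s_def less_SUP_iff by auto
    have fn0: "f n0 \<noteq> 0" using n0 by (auto simp: a_def log_ratio_def)
    then have fp: "f n0 > 0" using f_nonneg n0 by (metis less_eq_real_def one_le_numeral order_trans)
    have cl: "c < ln (f n0) / ln (real n0)" using n0 fn0 by (simp add: a_def log_ratio_def)
    obtain q D X where q: "q > 1" and D: "D > 0" and X: "X \<ge> 1" and cD: "c < ln D / ln q"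
      and rec: "\<forall>x\<ge>X. D * g x \<le> g (q*x)"
      using rec_lemma[OF f_nonneg wsm g_pos normal Reg n0(1) fp cl] by blast
    obtain \<theta> where th: "\<theta> > 0" and
      R: "\<forall>y' y. 0 < y' \<longrightarrow> y' \<le> y \<longrightarrow> y \<le> (1+\<theta>)*y' \<longrightarrow> (1-1/2) * g y' \<le> g y"
      using Reg[of "1/2"] by auto
    obtain G0 where G0: "G0 > 0" "\<forall>y. X \<le> y \<longrightarrow> y \<le> q * X \<longrightarrow> G0 \<le> g y"
      using base_lemma[OF g_pos th R, of X "q*X"] X by auto
    obtain H0 where H0: "\<forall>y\<ge>X. H0 + (ln D / ln q) * ln y \<le> ln (g y)"
      using iter_lemma[OF g_pos q X D rec G0] by blast
    define \<beta> where "\<beta> = ln D / ln q"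
    have bc: "\<beta> - c > 0" using cD by (simp add: \<beta>_def)
    define t where "t = (ln 2 - H0) / (\<beta> - c)"
    obtain K :: nat where K: "real K \<ge> max X (exp t) + 2" using real_arch_simple by blast
    show ?thesis
    proof (rule exI[of _ K], rule subsetI)
      fix n assume n: "n \<in> {n. a n < ereal c}"
      show "n \<in> {..<K} \<union> B2"
      proof (rule ccontr)
        assume "n \<notin> {..<K} \<union> B2"
        then have nK: "n \<ge> K" and nB: "n \<notin> B2" by auto
        have rn: "real n \<ge> real K" using nK by simp
        have mx: "max X (exp t) \<ge> X" "max X (exp t) \<ge> exp t" by auto
        have n1': "real n \<ge> X" "real n \<ge> exp t" "real n \<ge> 2" using K rn mx X by linarith+
        then have n1: "n \<ge> 1" "real n \<ge> X" "real n \<ge> exp t" "real n \<ge> 2" by auto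
        have gn: "g (real n) > 0" using g_pos n1 by auto
        have "\<bar>f n - g (real n)\<bar> < (1/2) * g (real n)" using nB n1 unfolding B2_def by auto
        moreover have "g (real n) - f n \<le> \<bar>f n - g (real n)\<bar>" by (simp add: abs_if)
        ultimately have fg: "f n > g (real n) / 2" by linarith
        then have fnp: "f n > 0" using gn by linarith
        have lnn: "ln (real n) > 0" using n1 by simp
        have "ln (g (real n) / 2) < ln (f n)" using fg gn by simp
        then have l1: "ln (g (real n)) - ln 2 < ln (f n)" using gn by (simp add: ln_div)
        have l2: "H0 + \<beta> * ln (real n) \<le> ln (g (real n))" using H0 n1 unfolding \<beta>_def by auto
        have "ln (exp t) \<le> ln (real n)" using n1 by (subst ln_le_cancel_iff) auto
        then have "t \<le> ln (real n)" by simp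
        then have "(ln 2 - H0) \<le> (\<beta> - c) * ln (real n)" using bc unfolding t_def
          by (simp add: divide_le_eq mult.commute)
        moreover have "(\<beta> - c) * ln (real n) = \<beta> * ln (real n) - c * ln (real n)" by (rule left_diff_distrib)
        ultimately have "c * ln (real n) < ln (f n)" using l1 l2 by linarith
        then have "c \<le> ln (f n) / ln (real n)" using lnn by (simp add: le_divide_eq)
        then have "ereal c \<le> a n" using fnp by (simp add: a_def log_ratio_def)
        then show False using n by simp
      qed
    qed
  qed
  have s_not_minf: "s \<noteq> -\<infinity>"
  proof -
    obtain N0 where N0: "N0 \<ge> 1" "\<forall>N\<ge>N0. real (card (B2 \<inter> {1..N})) \<le> 1/2 * real N"
      using ud0_ev[OF udB, of "1/2"] by auto
    define N where "N = N0 + 2"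
    have "\<exists>n\<in>{2..N}. f n \<noteq> 0"
    proof (rule ccontr)
      assume "\<not> ?thesis"
      then have "{2..N} \<subseteq> B2 \<inter> {1..N}" unfolding B2_def using g_pos by auto
      then have "card {2..N} \<le> card (B2 \<inter> {1..N})" by (intro card_mono) auto
      then have "real N - 1 \<le> real (card (B2 \<inter> {1..N}))" unfolding N_def by simp
      moreover have "real (card (B2 \<inter> {1..N})) \<le> 1/2 * real N"
      proof -
        have "N0 \<le> N" unfolding N_def by simp
        then show ?thesis using N0(2) by blast
      qed
      ultimately show False using N0 unfolding N_def by simp
    qed
    then obtain n where n: "n \<ge> 2" "f n \<noteq> 0" by auto
    then have "a n \<noteq> -\<infinity>" by (simp add: a_def log_ratio_def)
    moreover have "a n \<le> s" using le_s n by auto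
    ultimately show ?thesis by (metis ereal_infty_less_eq(2))
  qed
  have "has_ess_lim a s"
  proof (cases s)
    case (real r)
    show ?thesis unfolding has_ess_lim_def real
    proof (simp, intro allI impI)
      fix \<epsilon> :: real assume e: "\<epsilon> > 0"
      obtain K where K: "{n. a n < ereal (r - \<epsilon>)} \<subseteq> {..<K} \<union> B2"
        using key[of "r - \<epsilon>"] e real by auto
      have "{n. \<bar>a n - ereal r\<bar> > ereal \<epsilon>} \<subseteq> {..<max K 2} \<union> B2"
      proof
        fix n assume n: "n \<in> {n. \<bar>a n - ereal r\<bar> > ereal \<epsilon>}"
        show "n \<in> {..<max K 2} \<union> B2"
        proof (cases "n \<ge> 2")
          case True
          have ar: "a n \<le> ereal r" using le_s[OF True] real by simp
          have "a n < ereal (r - \<epsilon>)"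
          proof (cases "a n")
            case (real v)
            have "ereal \<epsilon> < \<bar>a n - ereal r\<bar>" using n by simp
            then have "ereal \<epsilon> < ereal \<bar>v - r\<bar>" using real by simp
            then have e1: "\<epsilon> < \<bar>v - r\<bar>" by simp
            have "v \<le> r" using ar real by simp
            then have "v < r - \<epsilon>" using e1 by (simp add: abs_if split: if_splits)
            then show ?thesis using real by simp
          next
            case PInf then show ?thesis using ar by simp
          next
            case MInf then show ?thesis by simp
          qed
          then show ?thesis using K by auto
        qed auto
      qed
      then show "has_natural_density {n. ereal \<epsilon> < \<bar>a n - ereal r\<bar>} 0"
        by (rule dens0_sub[OF udB])
    qed
  next
    case PInf
    show ?thesis unfolding has_ess_lim_def PInf
    proof (simp, intro allI)
      fix M :: real
      obtain K where "{n. a n < ereal M} \<subseteq> {..<K} \<union> B2" using key[of M] PInf by auto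
      then show "has_natural_density {n. a n < ereal M} 0" by (rule dens0_sub[OF udB])
    qed
  next
    case MInf then show ?thesis using s_not_minf by simp
  qed
  then show ?thesis unfolding a_def s_def .
qed

end
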